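(* The vector $\Gamma:=\big(\widehat\zeta-\Lambda\widehat\zeta,\ \Lambda\widehat\zeta-\Lambda^2\widehat\zeta\big)$ satisfies $\mathbf L\Gamma=\Gamma$, i.e. it is an eigenfunction of $\mathbf L$ with eigenvalue $1$. Moreover $\Gamma=-\frac{d}{dT}\Phi^T_{LP}\big|_{T=0}$, where $\Phi^T_{LP}(z):=\big((T+1)^{-1}\widehat\zeta(z(T+1)),\ \widehat\mu(z(T+1))\big)$ and $\widehat\mu:=\Lambda\widehat\zeta-\widehat\zeta$.
   Context: LP profile: $(\widehat\rho,\widehat\omega)$ real-analytic, even, solving $\widehat\rho'=-\frac{2y\widehat\rho\widehat\omega(\widehat\rho-\widehat\omega)}{1-y^2\widehat\omega^2}$, $\widehat\omega'=\frac{1-3\widehat\omega}{y}+\frac{2y\widehat\omega^2(\widehat\rho-\widehat\omega)}{1-y^2\widehat\omega^2}$, $\widehat\omega(0)=\frac13$, $\widehat\rho(0)>\frac13$. $\widehat\zeta$: increasing solution of $z\widehat\zeta'=\widehat\zeta\,\widehat\omega(\widehat\zeta)$ with $z^{-1/3}\widehat\zeta(z)\to1$ as $z\to0$; $C_{LP}:=\frac23\widehat\rho(0)$, so that $(z^2-\widehat\zeta_z^{-2})\widehat\zeta_{zz}+C_{LP}z\widehat\zeta^{-2}-2\widehat\zeta^{-1}=0$. $\widehat\partial_z:=z^{2/3}\partial_z$, $\widehat D_zf:=\partial_z(z^{2/3}f)$, $\Lambda:=z\partial_z$, $\widehat G:=(\widehat\partial_z\widehat\zeta)^{-2}$, $K\theta:=\widehat\partial_z(\widehat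 G\widehat D_z\theta)$, $\mathcal V:=\frac29z^{-2/3}\widehat G-2\widehat\zeta^{-2}+\frac43z^{-1/3}(\widehat\partial_z^2\widehat\zeta)\widehat G^{3/2}+2C_{LP}z\widehat\zeta^{-3}$, and $\mathbf L(\theta,\phi):=(\phi-\Lambda\theta+\theta,\ -\Lambda\phi+K\theta+\mathcal V\theta)$ (acting on smooth functions on $(0,\infty)$). *)

theory Defs
  imports "HOL-Analysis.Analysis"
begin

definition real_analytic_on :: "(real \<Rightarrow> real) \<Rightarrow> real set \<Rightarrow> bool" where
  "real_analytic_on f S \<longleftrightarrow>
     (\<forall>x\<in>S. \<exists>r>0. \<exists>a::nat \<Rightarrow> real. \<forall>y. \<bar>y - x\<bar> < r \<longrightarrow> (\<lambda>n. a n * (y - x) ^ n) sums f y)"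

definition hatd :: "(real \<Rightarrow> real) \<Rightarrow> real \<Rightarrow> real" where
  "hatd f z = z powr (2/3) * deriv f z"

definition hatD :: "(real \<Rightarrow> real) \<Rightarrow> real \<Rightarrow> real" where
  "hatD f z = deriv (\<lambda>s. s powr (2/3) * f s) z"

definition Lam :: "(real \<Rightarrow> real) \<Rightarrow> real \<Rightarrow> real" where
  "Lam f z = z * deriv f z"

definition Ghat :: "(real \<Rightarrow> real) \<Rightarrow> real \<Rightarrow> real" where
  "Ghat zeta z = inverse ((hatd zeta z)^2)"

definition Kop :: "(real \<Rightarrow> real) \<Rightarrow> (real \<Rightarrow> real) \<Rightarrow> real \<Rightarrow> real" where
  "Kop zeta \<theta> = hatd (\<lambda>s. Ghat zeta s * hatD \<theta> s)"

definition Vpot :: "real \<Rightarrow> (real \<Rightarrow> real) \<Rightarrow> real \<Rightarrow> real" where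
  "Vpot C zeta z =
     2/9 * z powr (-2/3) * Ghat zeta z - 2 * (zeta z) powr (-2)
     + 4/3 * z powr (-1/3) * hatd (hatd zeta) z * (Ghat zeta z) powr (3/2)
     + 2 * C * z * (zeta z) powr (-3)"

definition Lop :: "real \<Rightarrow> (real \<Rightarrow> real) \<Rightarrow> (real \<Rightarrow> real) \<times> (real \<Rightarrow> real)
                     \<Rightarrow> (real \<Rightarrow> real) \<times> (real \<Rightarrow> real)" where
  "Lop C zeta p = (case p of (\<theta>, \<phi>) \<Rightarrow>
     ((\<lambda>z. \<phi> z - Lam \<theta> z + \<theta> z),
      (\<lambda>z. - Lam \<phi> z + Kop zeta \<theta> z + Vpot C zeta z * \<theta> z)))"

end

theory Submission
  imports Defs
begin

lemma ps_deriv: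
  fixes f :: "real \<Rightarrow> real" and a :: "nat \<Rightarrow> real"
  assumes r: "r > 0" and S: "\<forall>y. \<bar>y - x\<bar> < r \<longrightarrow> (\<lambda>n. a n * (y - x)^n) sums f y"
  and y: "\<bar>y - x\<bar> < r"
  shows "(f has_real_derivative (\<Sum>n. diffs a n * (y - x)^n)) (at y)"
        "(\<lambda>n. diffs a n * (y - x)^n) sums deriv f y"
proof -
  have sm: "summable (\<lambda>n. a n * t^n)" if "norm t < r" for t
  proof -
    have "\<bar>(x + t) - x\<bar> < r" using that by simp
    then have "(\<lambda>n. a n * ((x + t) - x)^n) sums f (x + t)" using S by blast
    then show ?thesis by (simp add: sums_summable)
  qed
  have d: "((\<lambda>t. \<Sum>n. a n * t^n) has_real_derivative (\<Sum>n. diffs a n * (y-x)^n)) (at (y - x))"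
    by (rule termdiffs_strong'[OF sm]) (use y in auto)
  have l: "((\<lambda>u. u - x) has_real_derivative 1) (at y)" by (auto intro!: derivative_eq_intros)
  have d2: "((\<lambda>u. \<Sum>n. a n * (u - x)^n) has_real_derivative (\<Sum>n. diffs a n * (y-x)^n)) (at y)"
    using DERIV_chain2[OF d l] by simp
  show 1: "(f has_real_derivative (\<Sum>n. diffs a n * (y - x)^n)) (at y)"
  proof (rule has_field_derivative_transform_within_open[OF d2, of "{x - r <..< x + r}"])
    show "open {x - r <..< x + r}" by simp
    show "y \<in> {x - r <..< x + r}" using y by auto
    fix u assume "u \<in> {x - r <..< x + r}"
    then have "\<bar>u - x\<bar> < r" by auto
    then show "(\<Sum>n. a n * (u - x)^n) = f u" using S sums_unique by metis
  qed
  have "summable (\<lambda>n. diffs a n * (y - x)^n)"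
    by (rule termdiff_converges[of _ r]) (use y sm in auto)
  then show "(\<lambda>n. diffs a n * (y - x)^n) sums deriv f y"
    using DERIV_imp_deriv[OF 1] summable_sums by metis
qed

lemma diffs_pow0: "(diffs ^^ n) a 0 = fact n * (a n :: real)"
proof (induction n arbitrary: a)
  case 0 then show ?case by simp
next
  case (Suc n)
  have "(diffs ^^ Suc n) a 0 = (diffs ^^ n) (diffs a) 0" by (simp only: funpow_Suc_right comp_def)
  also have "\<dots> = fact n * diffs a n" by (rule Suc)
  also have "\<dots> = fact (Suc n) * a (Suc n)" by (simp add: diffs_def)
  finally show ?case .
qed

lemma ps_iter:
  fixes f :: "real \<Rightarrow> real" and a :: "nat \<Rightarrow> real"
  assumes r: "r > 0" and S: "\<forall>y. \<bar>y - x\<bar> < r \<longrightarrow> (\<lambda>n. a n * (y - x)^n) sums f y"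
  shows "\<forall>y. \<bar>y - x\<bar> < r \<longrightarrow> (\<lambda>k. (diffs^^n) a k * (y - x)^k) sums (deriv^^n) f y"
proof (induction n)
  case 0 then show ?case using S by simp
next
  case (Suc n)
  show ?case using ps_deriv(2)[OF r Suc] by simp
qed

lemma ra_deriv:
  assumes "real_analytic_on f UNIV"
  shows "(f has_real_derivative deriv f x) (at x)"
proof -
  obtain r a where r: "r > 0" and S: "\<forall>y. \<bar>y - x\<bar> < r \<longrightarrow> (\<lambda>n. a n * (y - x)^n) sums f y"
    using assms unfolding real_analytic_on_def by blast
  from ps_deriv(1)[OF r S, of x] show ?thesis using DERIV_imp_deriv by (metis abs_zero diff_self r)
qed

lemma ra_iter:
  assumes "real_analytic_on f UNIV"
  shows "real_analytic_on ((deriv^^n) f) UNIV"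
  unfolding real_analytic_on_def
proof
  fix x :: real
  obtain r a where r: "r > 0" and S: "\<forall>y. \<bar>y - x\<bar> < r \<longrightarrow> (\<lambda>n. a n * (y - x)^n) sums f y"
    using assms unfolding real_analytic_on_def by blast
  show "\<exists>r>0. \<exists>a. \<forall>y. \<bar>y - x\<bar> < r \<longrightarrow> (\<lambda>n. a n * (y - x) ^ n) sums (deriv ^^ n) f y"
    using ps_iter[OF r S, of n] r by blast
qed

lemma ra_deriv_an:
  assumes "real_analytic_on f UNIV"
  shows "real_analytic_on (deriv f) UNIV"
  using ra_iter[OF assms, of 1] by simp

lemma ra_cont:
  assumes "real_analytic_on f UNIV"
  shows "continuous_on UNIV f" "isCont f x"
  using ra_deriv[OF assms] DERIV_isCont continuous_at_imp_continuous_on by blast+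

lemma ra_zero:
  fixes f :: "real \<Rightarrow> real"
  assumes A: "real_analytic_on f UNIV" and uv: "u < v" and Z: "\<forall>y. u < y \<and> y < v \<longrightarrow> f y = 0"
  shows "f x = 0"
proof -
  define T where "T = {x. \<forall>n. (deriv^^n) f x = 0}"
  have "T = (\<Inter>n. {x. (deriv^^n) f x = 0})" unfolding T_def by auto
  moreover have "closed {x. (deriv^^n) f x = 0}" for n
    by (rule closed_Collect_eq) (auto intro: ra_cont[OF ra_iter[OF A]])
  ultimately have cT: "closed T" by auto
  have oT: "open T"
    unfolding open_dist
  proof
    fix x assume xT: "x \<in> T"
    obtain r a where r: "r > 0" and S: "\<forall>y. \<bar>y - x\<bar> < r \<longrightarrow> (\<lambda>n. a n * (y - x)^n) sums f y"
      using A unfolding real_analytic_on_def by blast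
    have a0: "a n = 0" for n
    proof -
      have "(\<lambda>k. (diffs^^n) a k * (x - x)^k) sums (deriv^^n) f x" by (rule mp[OF spec[OF ps_iter[OF r S, of n], of x]]) (use r in simp)
      then have "(\<lambda>k. (diffs^^n) a k * 0^k) sums (deriv^^n) f x" by (simp only: diff_self)
      then have "(diffs^^n) a 0 = (deriv^^n) f x" using powser_sums_zero[of "(diffs^^n) a"] sums_unique2 by blast
      then show ?thesis using xT unfolding T_def by (simp add: diffs_pow0)
    qed
    have dz: "(diffs^^n) a = (\<lambda>_. 0)" for n
    proof (induction n)
      case 0 then show ?case using a0 by auto
    next
      case (Suc n) then show ?case by (simp add: diffs_def)
    qed
    show "\<exists>e>0. \<forall>y. dist y x < e \<longrightarrow> y \<in> T"
    proof -
      have "y \<in> T" if "dist y x < r" for y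
      proof -
        have yr: "\<bar>y - x\<bar> < r" using that by (simp add: dist_real_def)
        show "y \<in> T" unfolding T_def mem_Collect_eq
        proof (intro allI)
          fix n
          have "(\<lambda>k. (diffs^^n) a k * (y - x)^k) sums (deriv^^n) f y" using ps_iter[OF r S, of n] yr by blast
          then have "(\<lambda>k. 0) sums (deriv^^n) f y" by (simp add: dz)
          then show "(deriv^^n) f y = 0" using sums_zero sums_unique2 by blast
        qed
      qed
      then show ?thesis using r by blast
    qed
  qed
  have loc: "\<forall>y. u < y \<and> y < v \<longrightarrow> (deriv^^n) f y = 0" for n
  proof (induction n)
    case 0 then show ?case using Z by simp
  next
    case (Suc n)
    show ?case
    proof (intro allI impI)
      fix y assume y: "u < y \<and> y < v"
      have "((deriv^^n) f has_real_derivative 0) (at y)"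
        by (rule has_field_derivative_transform_within_open[of "\<lambda>_. 0" 0 y "{u<..<v}"])
           (use y Suc in auto)
      then show "(deriv^^Suc n) f y = 0" using DERIV_imp_deriv by simp
    qed
  qed
  have "(u + v) / 2 \<in> T" unfolding T_def using loc uv by auto
  then have "T = UNIV" using clopen[of T] cT oT by auto
  then show ?thesis unfolding T_def by (metis (mono_tags) UNIV_I funpow_0 mem_Collect_eq)
qed

lemma ra_lin:
  fixes f :: "real \<Rightarrow> real"
  assumes A: "real_analytic_on f UNIV"
  shows "real_analytic_on (\<lambda>y. y * f y - e) UNIV"
  unfolding real_analytic_on_def
proof
  fix x :: real
  obtain r a where r: "r > 0" and S: "\<forall>y. \<bar>y - x\<bar> < r \<longrightarrow> (\<lambda>n. a n * (y - x)^n) sums f y"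
    using A unfolding real_analytic_on_def by blast
  define b where "b n = x * a n + (if n = 0 then - e else a (n - 1))" for n
  have "(\<lambda>n. b n * (y - x)^n) sums (y * f y - e)" if y: "\<bar>y - x\<bar> < r" for y
  proof -
    have s: "(\<lambda>n. a n * (y - x)^n) sums f y" using S y by auto
    have s1: "(\<lambda>n. x * (a n * (y - x)^n)) sums (x * f y)" by (rule sums_mult[OF s])
    have "(\<lambda>n. (y - x) * (a n * (y - x)^n)) sums ((y - x) * f y)" by (rule sums_mult[OF s])
    then have "(\<lambda>n. (\<lambda>k. if k = 0 then - e else a (k - 1) * (y - x)^k) (Suc n)) sums ((y - x) * f y)"
      by (simp add: algebra_simps)
    then have s2: "(\<lambda>k. if k = 0 then - e else a (k - 1) * (y - x)^k) sums ((y - x) * f y + - e)"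
      by (subst (asm) sums_Suc_iff) simp
    have "(\<lambda>n. x * (a n * (y - x)^n) + (if n = 0 then - e else a (n - 1) * (y - x)^n)) sums (x * f y + ((y - x) * f y + - e))"
      by (rule sums_add[OF s1 s2])
    moreover have "(\<lambda>n. x * (a n * (y - x)^n) + (if n = 0 then - e else a (n - 1) * (y - x)^n)) = (\<lambda>n. b n * (y - x)^n)"
      by (auto simp: b_def algebra_simps)
    ultimately show ?thesis by (simp add: algebra_simps)
  qed
  then show "\<exists>r>0. \<exists>a. \<forall>y. \<bar>y - x\<bar> < r \<longrightarrow> (\<lambda>n. a n * (y - x) ^ n) sums (y * f y - e)"
    using r by blast
qed


lemma dense_good:
  fixes omega :: "real \<Rightarrow> real"
  assumes om: "real_analytic_on omega UNIV" and uv: "u < v"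
  shows "\<exists>y. u < y \<and> y < v \<and> y \<noteq> 0 \<and> 1 - y\<^sup>2 * (omega y)\<^sup>2 \<noteq> 0"
proof (rule ccontr)
  assume H: "\<not> ?thesis"
  obtain u' v' where uv': "u \<le> u'" "u' < v'" "v' \<le> v" "0 \<notin> {u'<..<v'}"
  proof (cases "0 \<le> u")
    case True then show ?thesis using that[of u v] uv by auto
  next
    case False then show ?thesis using that[of u "min v 0"] uv by auto
  qed
  have P: "(y * omega y - 1) * (y * omega y + 1) = 0" if "u' < y" "y < v'" for y
  proof -
    have "y \<noteq> 0" using uv' that by auto
    then have "1 - y\<^sup>2 * (omega y)\<^sup>2 = 0" using H uv' that by force
    then show ?thesis by (simp add: algebra_simps power2_eq_square)
  qed
  have cont: "isCont (\<lambda>y. y * omega y - 1) c" for c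
    using ra_cont(2)[OF om] by (intro continuous_intros) auto
  show False
  proof (cases "\<forall>y. u' < y \<and> y < v' \<longrightarrow> y * omega y - 1 = 0")
    case True
    have "0 * omega 0 - 1 = (0::real)"
      by (rule ra_zero[OF ra_lin[OF om] uv'(2)]) (use True in auto)
    then show False by simp
  next
    case False
    then obtain c where c: "u' < c" "c < v'" "c * omega c - 1 \<noteq> 0" by auto
    obtain e where e: "e > 0" "\<forall>y. dist c y < e \<longrightarrow> y * omega y - 1 \<noteq> 0"
      using continuous_at_avoid[OF cont c(3)] by auto
    have "0 * omega 0 - (-1) = (0::real)"
    proof (rule ra_zero[OF ra_lin[OF om], of "max u' (c - e)" "min v' (c + e)"])
      show "max u' (c - e) < min v' (c + e)" using c e by auto
      show "\<forall>y. max u' (c - e) < y \<and> y < min v' (c + e) \<longrightarrow> y * omega y - - 1 = 0"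
      proof (intro allI impI)
        fix y assume y: "max u' (c - e) < y \<and> y < min v' (c + e)"
        then have "dist c y < e" by (auto simp: dist_real_def)
        then have "y * omega y - 1 \<noteq> 0" using e by auto
        moreover have "(y * omega y - 1) * (y * omega y + 1) = 0" using P y by auto
        ultimately show "y * omega y - - 1 = 0" by simp
      qed
    qed
    then show False by simp
  qed
qed

lemma ext_zero:
  fixes omega R :: "real \<Rightarrow> real"
  assumes om: "real_analytic_on omega UNIV" and cR: "isCont R y0"
    and Z: "\<forall>y. y \<noteq> 0 \<and> 1 - y\<^sup>2 * (omega y)\<^sup>2 \<noteq> 0 \<longrightarrow> R y = 0"
  shows "R y0 = 0"
proof (rule ccontr)
  assume "R y0 \<noteq> 0"
  then obtain e where e: "e > 0" "\<forall>y. dist y0 y < e \<longrightarrow> R y \<noteq> 0"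
    using continuous_at_avoid[OF cR] by auto
  obtain y where "y0 - e < y" "y < y0 + e" "y \<noteq> 0 \<and> 1 - y\<^sup>2 * (omega y)\<^sup>2 \<noteq> 0"
    using dense_good[OF om, of "y0 - e" "y0 + e"] e by auto
  moreover then have "dist y0 y < e" by (auto simp: dist_real_def)
  ultimately show False using e Z by auto
qed

lemma alg1: "(y::real) \<noteq> 0 \<Longrightarrow> D \<noteq> 0 \<Longrightarrow> r*(3*w + y*((1-3*w)/y + 2*y*w\<^sup>2*(r-w)/D)) + y*w*(-(2*y*r*w*(r-w))/D) - r = 0"
  by (simp add: field_simps power2_eq_square)

lemma alg2: "(y::real) \<noteq> 0 \<Longrightarrow> D \<noteq> 0 \<Longrightarrow> D * (y * ((1-3*w)/y + 2*y*w\<^sup>2*(r-w)/D) - 1 + 3 * w) - 2 * y\<^sup>2 * w\<^sup>2 * (r - w) = 0"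
  by (simp add: field_simps power2_eq_square)

lemma LP_rel:
  fixes rho omega :: "real \<Rightarrow> real"
  assumes rho_an: "real_analytic_on rho UNIV"
    and omega_an: "real_analytic_on omega UNIV"
    and rho_ode: "\<forall>y. y \<noteq> 0 \<and> 1 - y\<^sup>2 * (omega y)\<^sup>2 \<noteq> 0 \<longrightarrow>
        (rho has_real_derivative
           (- (2 * y * rho y * omega y * (rho y - omega y)) / (1 - y\<^sup>2 * (omega y)\<^sup>2))) (at y)"
    and omega_ode: "\<forall>y. y \<noteq> 0 \<and> 1 - y\<^sup>2 * (omega y)\<^sup>2 \<noteq> 0 \<longrightarrow>
        (omega has_real_derivative
           ((1 - 3 * omega y) / y
            + (2 * y * (omega y)\<^sup>2 * (rho y - omega y)) / (1 - y\<^sup>2 * (omega y)\<^sup>2))) (at y)"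
  shows "rho y * (3 * omega y + y * deriv omega y) + y * omega y * deriv rho y - rho y = 0"
    and "(1 - y\<^sup>2 * (omega y)\<^sup>2) * (y * deriv omega y - 1 + 3 * omega y) - 2 * y\<^sup>2 * (omega y)\<^sup>2 * (rho y - omega y) = 0"
proof -
  have c1: "isCont rho x" "isCont omega x" "isCont (deriv rho) x" "isCont (deriv omega) x" for x
    using ra_cont(2) rho_an omega_an ra_deriv_an by blast+
  have dr: "deriv rho y = - (2 * y * rho y * omega y * (rho y - omega y)) / (1 - y\<^sup>2 * (omega y)\<^sup>2)"
    and dw: "deriv omega y = (1 - 3 * omega y) / y
            + (2 * y * (omega y)\<^sup>2 * (rho y - omega y)) / (1 - y\<^sup>2 * (omega y)\<^sup>2)"
    if "y \<noteq> 0 \<and> 1 - y\<^sup>2 * (omega y)\<^sup>2 \<noteq> 0" for y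
    using rho_ode omega_ode that DERIV_imp_deriv by blast+
  show "rho y * (3 * omega y + y * deriv omega y) + y * omega y * deriv rho y - rho y = 0"
  proof (rule ext_zero[OF omega_an, where R = "\<lambda>y. rho y * (3 * omega y + y * deriv omega y) + y * omega y * deriv rho y - rho y"])
    show "isCont (\<lambda>y. rho y * (3 * omega y + y * deriv omega y) + y * omega y * deriv rho y - rho y) y"
      by (intro continuous_intros c1)
    show "\<forall>y. y \<noteq> 0 \<and> 1 - y\<^sup>2 * (omega y)\<^sup>2 \<noteq> 0 \<longrightarrow> rho y * (3 * omega y + y * deriv omega y) + y * omega y * deriv rho y - rho y = 0"
    proof (intro allI impI)
      fix y assume h: "y \<noteq> 0 \<and> 1 - y\<^sup>2 * (omega y)\<^sup>2 \<noteq> 0"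
      show "rho y * (3 * omega y + y * deriv omega y) + y * omega y * deriv rho y - rho y = 0"
        unfolding dr[OF h] dw[OF h] using alg1[of y "1 - y\<^sup>2 * (omega y)\<^sup>2" "rho y" "omega y"] h by blast
    qed
  qed
  show "(1 - y\<^sup>2 * (omega y)\<^sup>2) * (y * deriv omega y - 1 + 3 * omega y) - 2 * y\<^sup>2 * (omega y)\<^sup>2 * (rho y - omega y) = 0"
  proof (rule ext_zero[OF omega_an, where R = "\<lambda>y. (1 - y\<^sup>2 * (omega y)\<^sup>2) * (y * deriv omega y - 1 + 3 * omega y) - 2 * y\<^sup>2 * (omega y)\<^sup>2 * (rho y - omega y)"])
    show "isCont (\<lambda>y. (1 - y\<^sup>2 * (omega y)\<^sup>2) * (y * deriv omega y - 1 + 3 * omega y) - 2 * y\<^sup>2 * (omega y)\<^sup>2 * (rho y - omega y)) y"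
      by (intro continuous_intros c1)
    show "\<forall>y. y \<noteq> 0 \<and> 1 - y\<^sup>2 * (omega y)\<^sup>2 \<noteq> 0 \<longrightarrow> (1 - y\<^sup>2 * (omega y)\<^sup>2) * (y * deriv omega y - 1 + 3 * omega y) - 2 * y\<^sup>2 * (omega y)\<^sup>2 * (rho y - omega y) = 0"
    proof (intro allI impI)
      fix y assume h: "y \<noteq> 0 \<and> 1 - y\<^sup>2 * (omega y)\<^sup>2 \<noteq> 0"
      show "(1 - y\<^sup>2 * (omega y)\<^sup>2) * (y * deriv omega y - 1 + 3 * omega y) - 2 * y\<^sup>2 * (omega y)\<^sup>2 * (rho y - omega y) = 0"
        unfolding dw[OF h] using alg2[of y "1 - y\<^sup>2 * (omega y)\<^sup>2" "omega y" "rho y"] h by blast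
    qed
  qed
qed


lemma zeta_props:
  fixes rho omega zeta :: "real \<Rightarrow> real"
  assumes rho_an: "real_analytic_on rho UNIV"
    and omega_an: "real_analytic_on omega UNIV"
    and rho_ode: "\<forall>y. y \<noteq> 0 \<and> 1 - y\<^sup>2 * (omega y)\<^sup>2 \<noteq> 0 \<longrightarrow>
        (rho has_real_derivative
           (- (2 * y * rho y * omega y * (rho y - omega y)) / (1 - y\<^sup>2 * (omega y)\<^sup>2))) (at y)"
    and omega_ode: "\<forall>y. y \<noteq> 0 \<and> 1 - y\<^sup>2 * (omega y)\<^sup>2 \<noteq> 0 \<longrightarrow>
        (omega has_real_derivative
           ((1 - 3 * omega y) / y
            + (2 * y * (omega y)\<^sup>2 * (rho y - omega y)) / (1 - y\<^sup>2 * (omega y)\<^sup>2))) (at y)"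
    and omega0: "omega 0 = 1/3"
    and zeta_incr: "strict_mono_on {0<..} zeta"
    and zeta_ode: "\<forall>z>0. zeta differentiable (at z) \<and> z * deriv zeta z = zeta z * omega (zeta z)"
    and zeta_asym: "((\<lambda>z. z powr (-1/3) * zeta z) \<longlongrightarrow> 1) (at_right 0)"
  shows "\<forall>z>0. zeta z > 0 \<and> omega (zeta z) > 0 \<and> 2 * zeta z ^ 3 * rho (zeta z) * omega (zeta z) = 2/3 * rho 0 * z"
proof -
  have dz: "(zeta has_real_derivative zeta z * omega (zeta z) / z) (at z)" if "z > 0" for z
  proof -
    have "(zeta has_real_derivative deriv zeta z) (at z)"
      using zeta_ode that DERIV_deriv_iff_real_differentiable by blast
    moreover have "deriv zeta z = zeta z * omega (zeta z) / z" using zeta_ode that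
      by (simp add: field_simps)
    ultimately show ?thesis by simp
  qed
  have mono: "zeta a < zeta b" if "0 < a" "a < b" for a b
    using zeta_incr that by (auto intro: strict_mono_onD)
  have "\<forall>\<^sub>F z in at_right 0. z powr (-1/3) * zeta z > 1/2"
    by (rule order_tendstoD(1)[OF zeta_asym]) simp
  then obtain b where b: "b > 0" "\<forall>z>0. z < b \<longrightarrow> z powr (-1/3) * zeta z > 1/2"
    unfolding eventually_at_right_field by blast
  have zpos: "zeta z > 0" if "z > 0" for z
  proof -
    define z' where "z' = min z b / 2"
    have z': "0 < z'" "z' < b" "z' < z" using that b unfolding z'_def by auto
    have "z' powr (-1/3) * zeta z' > 1/2" using b z' by auto
    moreover have "z' powr (-1/3) > 0" using z' by simp
    ultimately have "zeta z' > 0"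
    proof (cases "zeta z' > 0")
      case False
      then have "z' powr (-1/3) * zeta z' \<le> 0"
        using \<open>z' powr (-1/3) > 0\<close> by (intro mult_nonneg_nonpos) auto
      then show ?thesis using \<open>z' powr (-1/3) * zeta z' > 1/2\<close> by linarith
    qed
    then show ?thesis using mono[OF z'(1) z'(3)] by simp
  qed
  have wnn: "omega (zeta z) \<ge> 0" if "z > 0" for z
  proof (rule ccontr)
    assume "\<not> ?thesis"
    then have "zeta z * omega (zeta z) / z < 0" using zpos[OF that] that
      by (simp add: divide_neg_pos mult_pos_neg)
    from DERIV_neg_dec_right[OF dz[OF that] this] obtain d where
      d: "d > 0" "\<forall>h>0. h < d \<longrightarrow> zeta z > zeta (z + h)" by blast
    have "zeta z > zeta (z + d/2)" using d by auto
    moreover have "zeta z < zeta (z + d/2)" using mono[OF that, of "z + d/2"] d by auto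
    ultimately show False by simp
  qed
  have wpos: "omega (zeta z) > 0" if z0: "z > 0" for z
  proof (rule ccontr)
    assume "\<not> ?thesis"
    then have w0: "omega (zeta z) = 0" using wnn[OF z0] by simp
    define y0 where "y0 = zeta z"
    have y0: "y0 > 0" using zpos[OF z0] y0_def by simp
    have h: "y0 \<noteq> 0 \<and> 1 - y0\<^sup>2 * (omega y0)\<^sup>2 \<noteq> 0" using y0 w0 y0_def by simp
    have "(omega has_real_derivative ((1 - 3 * omega y0) / y0
            + (2 * y0 * (omega y0)\<^sup>2 * (rho y0 - omega y0)) / (1 - y0\<^sup>2 * (omega y0)\<^sup>2))) (at y0)"
      using omega_ode h by blast
    then have "(omega has_real_derivative 1 / y0) (at y0)" using w0 y0_def by simp
    from DERIV_pos_inc_left[OF this] y0 obtain d where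
      d: "d > 0" "\<forall>h>0. h < d \<longrightarrow> omega (y0 - h) < omega y0" by auto
    have "isCont zeta z" using DERIV_isCont[OF dz[OF z0]] .
    then have "zeta \<midarrow>z\<rightarrow> zeta z" by (simp add: isCont_def)
    from LIM_D[OF this d(1)] obtain s where s: "s > 0"
      "\<forall>x. x \<noteq> z \<and> norm (x - z) < s \<longrightarrow> norm (zeta x - zeta z) < d" by blast
    define z1 where "z1 = z - min s z / 2"
    have z1: "0 < z1" "z1 < z" "norm (z1 - z) < s" using s z0 unfolding z1_def by auto
    have "norm (zeta z1 - zeta z) < d" using s z1 by auto
    moreover have "zeta z1 < zeta z" using mono z1 by auto
    ultimately have "zeta z - zeta z1 > 0" "zeta z - zeta z1 < d" by auto
    then have "omega (y0 - (zeta z - zeta z1)) < omega y0"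
      using d(2) by blast
    then have "omega (zeta z1) < 0" using w0 y0_def by simp
    then show False using wnn[OF z1(1)] by simp
  qed
  define Gf where "Gf z = zeta z ^ 3 * rho (zeta z) * omega (zeta z) / z" for z
  have dr: "\<And>y. (rho has_real_derivative deriv rho y) (at y)" using ra_deriv[OF rho_an] by blast
  have dw: "\<And>y. (omega has_real_derivative deriv omega y) (at y)" using ra_deriv[OF omega_an] by blast
  have G0: "(Gf has_real_derivative 0) (at z)" if z0: "z > 0" for z
  proof -
    define y where "y = zeta z"
    define p where "p = zeta z * omega (zeta z) / z"
    have R: "rho y * (3 * omega y + y * deriv omega y) + y * omega y * deriv rho y - rho y = 0"
      using LP_rel(1)[OF rho_an omega_an rho_ode omega_ode] .
    have c3: "((\<lambda>w. zeta w ^ 3) has_real_derivative of_nat 3 * (p * zeta z ^ (3 - Suc 0))) (at z)"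
      using DERIV_power[OF dz[OF z0], of 3] unfolding p_def .
    have cr: "((\<lambda>w. rho (zeta w)) has_real_derivative deriv rho y * p) (at z)"
      using DERIV_chain'[OF dz[OF z0] dr] unfolding p_def y_def .
    have cw: "((\<lambda>w. omega (zeta w)) has_real_derivative deriv omega y * p) (at z)"
      using DERIV_chain'[OF dz[OF z0] dw] unfolding p_def y_def .
    have "(Gf has_real_derivative
      (((of_nat 3 * (p * y ^ (3 - Suc 0)) * rho y + deriv rho y * p * y ^ 3) * omega y + deriv omega y * p * (y ^ 3 * rho y)) * z
        - y ^ 3 * rho y * omega y * 1) / (z * z)) (at z)"
      using DERIV_divide[OF DERIV_mult[OF DERIV_mult[OF c3 cr] cw] DERIV_ident] z0
      unfolding Gf_def[abs_def] y_def by simp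
    moreover have "(((of_nat 3 * (p * y ^ (3 - Suc 0)) * rho y + deriv rho y * p * y ^ 3) * omega y + deriv omega y * p * (y ^ 3 * rho y)) * z
        - y ^ 3 * rho y * omega y * 1) = y^2 * z * p * (rho y * (3 * omega y + y * deriv omega y) + y * omega y * deriv rho y - rho y)"
      using z0 unfolding p_def y_def by (simp add: field_simps power2_eq_square power3_eq_cube)
    ultimately show ?thesis using R by simp
  qed
  have "\<exists>c. \<forall>x\<in>{0<..}. Gf x = c"
    by (rule has_field_derivative_zero_constant) (auto intro: has_field_derivative_at_within G0)
  then obtain c where c: "\<forall>x\<in>{0<..}. Gf x = c" by blast
  have zt: "(zeta \<longlongrightarrow> 0) (at_right 0)"
  proof -
    have t1: "((\<lambda>z::real. z) \<longlongrightarrow> 0) (at_right 0)" by (rule tendsto_ident_at)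
    have e1: "\<forall>\<^sub>F z in at_right 0. 0 \<le> (z::real)" by (rule eventually_at_rightI[of 0 1]) auto
    have "((\<lambda>z::real. z powr (1/3)) \<longlongrightarrow> 0) (at_right 0)"
      using tendsto_zero_powrI[OF t1 tendsto_const e1, of "1/3"] by simp
    then have L: "((\<lambda>z. z powr (1/3) * (z powr (-1/3) * zeta z)) \<longlongrightarrow> 0 * 1) (at_right 0)"
      by (intro tendsto_mult zeta_asym)
    have ev: "\<forall>\<^sub>F z in at_right 0. z powr (1/3) * (z powr (-1/3) * zeta z) = zeta z"
      by (rule eventually_at_rightI[of 0 1]) (auto simp: mult.assoc[symmetric] powr_add[symmetric])
    show ?thesis using L tendsto_cong[OF ev] by simp
  qed
  have Gt: "(Gf \<longlongrightarrow> 1^3 * rho 0 * omega 0) (at_right 0)"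
  proof -
    have L: "((\<lambda>z. (z powr (-1/3) * zeta z)^3 * rho (zeta z) * omega (zeta z)) \<longlongrightarrow> 1^3 * rho 0 * omega 0) (at_right 0)"
      by (intro tendsto_mult tendsto_power zeta_asym isCont_tendsto_compose[OF ra_cont(2)[OF rho_an] zt]
           isCont_tendsto_compose[OF ra_cont(2)[OF omega_an] zt])
    have ev: "\<forall>\<^sub>F z in at_right 0. (z powr (-1/3) * zeta z)^3 * rho (zeta z) * omega (zeta z) = Gf z"
    proof (rule eventually_at_rightI[of 0 1])
      fix z :: real assume "z \<in> {0<..<1}"
      then have z: "z > 0" by auto
      have "(z powr (-1/3))^3 = z powr (-1)" using z by (simp add: powr_power)
      also have "\<dots> = 1 / z" using z by (simp add: powr_minus divide_inverse)
      finally show "(z powr (-1/3) * zeta z)^3 * rho (zeta z) * omega (zeta z) = Gf z"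
        unfolding Gf_def by (simp add: power_mult_distrib)
    qed simp
    show ?thesis using L tendsto_cong[OF ev] by blast
  qed
  have ev: "\<forall>\<^sub>F z in at_right 0. c = Gf z"
    using c by (auto intro: eventually_at_rightI[of 0 1])
  have Gc: "(Gf \<longlongrightarrow> c) (at_right 0)" using tendsto_cong[OF ev] tendsto_const[of c] by blast
  have cval: "c = rho 0 / 3" using tendsto_unique[OF _ Gc Gt] omega0 by simp
  show ?thesis
  proof (intro allI impI conjI)
    fix z :: real assume z: "z > 0"
    show "zeta z > 0" "omega (zeta z) > 0" using zpos wpos z by auto
    have "Gf z = rho 0 / 3" using c cval z by auto
    then show "2 * zeta z ^ 3 * rho (zeta z) * omega (zeta z) = 2/3 * rho 0 * z"
      unfolding Gf_def using z by (simp add: field_simps)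
  qed
qed


lemma zeta_smooth:
  fixes rho omega zeta :: "real \<Rightarrow> real"
  assumes rho_an: "real_analytic_on rho UNIV"
    and omega_an: "real_analytic_on omega UNIV"
    and rho_ode: "\<forall>y. y \<noteq> 0 \<and> 1 - y\<^sup>2 * (omega y)\<^sup>2 \<noteq> 0 \<longrightarrow>
        (rho has_real_derivative
           (- (2 * y * rho y * omega y * (rho y - omega y)) / (1 - y\<^sup>2 * (omega y)\<^sup>2))) (at y)"
    and omega_ode: "\<forall>y. y \<noteq> 0 \<and> 1 - y\<^sup>2 * (omega y)\<^sup>2 \<noteq> 0 \<longrightarrow>
        (omega has_real_derivative
           ((1 - 3 * omega y) / y
            + (2 * y * (omega y)\<^sup>2 * (rho y - omega y)) / (1 - y\<^sup>2 * (omega y)\<^sup>2))) (at y)"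
    and omega0: "omega 0 = 1/3"
    and zeta_incr: "strict_mono_on {0<..} zeta"
    and zeta_ode: "\<forall>z>0. zeta differentiable (at z) \<and> z * deriv zeta z = zeta z * omega (zeta z)"
    and zeta_asym: "((\<lambda>z. z powr (-1/3) * zeta z) \<longlongrightarrow> 1) (at_right 0)"
    and z0: "z > 0"
  defines "p \<equiv> deriv zeta" and "q \<equiv> deriv (deriv zeta)" and "s \<equiv> deriv (deriv (deriv zeta))"
    and "C \<equiv> 2/3 * rho 0"
  shows "(zeta has_real_derivative p z) (at z) \<and> (p has_real_derivative q z) (at z)
     \<and> (q has_real_derivative s z) (at z) \<and> zeta z > 0 \<and> p z > 0
     \<and> (z\<^sup>2 - 1 / (p z)\<^sup>2) * q z + C * z / (zeta z)\<^sup>2 - 2 / zeta z = 0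
     \<and> (2 * z + 2 * q z / (p z)^3) * q z + (z\<^sup>2 - 1 / (p z)\<^sup>2) * s z + C / (zeta z)\<^sup>2
        - 2 * C * z * p z / (zeta z)^3 + 2 * p z / (zeta z)\<^sup>2 = 0"
proof -
  have ZP: "\<forall>z>0. zeta z > 0 \<and> omega (zeta z) > 0 \<and> 2 * zeta z ^ 3 * rho (zeta z) * omega (zeta z) = 2/3 * rho 0 * z"
    by (rule zeta_props[OF rho_an omega_an rho_ode omega_ode omega0 zeta_incr zeta_ode zeta_asym])
  define P where "P w = zeta w * omega (zeta w) / w" for w
  define Q where "Q w = P w * (omega (zeta w) + zeta w * deriv omega (zeta w) - 1) / w" for w
  have dw: "\<And>y. (omega has_real_derivative deriv omega y) (at y)" using ra_deriv[OF omega_an] by blast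
  have dw1: "\<And>y. (deriv omega has_real_derivative deriv (deriv omega) y) (at y)"
    using ra_deriv[OF ra_deriv_an[OF omega_an]] by blast
  have dzP: "(zeta has_real_derivative P w) (at w)" if "w > 0" for w
  proof -
    have "(zeta has_real_derivative deriv zeta w) (at w)"
      using zeta_ode that DERIV_deriv_iff_real_differentiable by blast
    moreover have "deriv zeta w = P w" using zeta_ode that unfolding P_def
      by (simp add: field_simps)
    ultimately show ?thesis by simp
  qed
  have cw: "((\<lambda>w. omega (zeta w)) has_real_derivative deriv omega (zeta w) * P w) (at w)" if "w > 0" for w
    using DERIV_chain'[OF dzP[OF that] dw] .
  have cw1: "((\<lambda>w. deriv omega (zeta w)) has_real_derivative deriv (deriv omega) (zeta w) * P w) (at w)" if "w > 0" for w
    using DERIV_chain'[OF dzP[OF that] dw1] .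
  have dP: "(P has_real_derivative Q w) (at w)" if w: "w > 0" for w
  proof -
    have "((\<lambda>w. zeta w * omega (zeta w) / w) has_real_derivative
       ((P w * omega (zeta w) + zeta w * (deriv omega (zeta w) * P w)) * w - zeta w * omega (zeta w)) / w\<^sup>2) (at w)"
      using w by (auto intro!: derivative_eq_intros dzP cw simp: power2_eq_square)
    moreover have "((P w * omega (zeta w) + zeta w * (deriv omega (zeta w) * P w)) * w - zeta w * omega (zeta w)) / w\<^sup>2 = Q w"
      using w unfolding Q_def P_def by (simp add: field_simps power2_eq_square)
    ultimately show ?thesis unfolding P_def[abs_def] by simp
  qed
  have Qd: "\<exists>S. (Q has_real_derivative S) (at w)" if w: "w > 0" for w
  proof -
    note D = DERIV_divide[OF DERIV_mult[OF dP[OF w] DERIV_diff[OF DERIV_add[OF cw[OF w] DERIV_mult[OF dzP[OF w] cw1[OF w]]] DERIV_const[of 1]]] DERIV_ident]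
    show ?thesis unfolding Q_def[abs_def] using D w by auto
  qed
  have pP: "p w = P w" if "w > 0" for w
    unfolding p_def using DERIV_imp_deriv[OF dzP[OF that]] .
  have Dz: "(zeta has_real_derivative p w) (at w)" if "w > 0" for w
    using dzP[OF that] pP[OF that] by simp
  have Dp0: "(p has_real_derivative Q w) (at w)" if "w > 0" for w
    by (rule has_field_derivative_transform_within_open[OF dP[OF that], of "{0<..}"]) (use that pP in auto)
  have qQ: "q w = Q w" if "w > 0" for w
    unfolding q_def using DERIV_imp_deriv[OF Dp0[OF that]] p_def by simp
  have Dp: "(p has_real_derivative q w) (at w)" if "w > 0" for w
    using Dp0[OF that] qQ[OF that] by simp
  have Dq: "(q has_real_derivative s w) (at w)" if w: "w > 0" for w
  proof -
    obtain S where S: "(Q has_real_derivative S) (at w)" using Qd[OF w] by blast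
    have "(q has_real_derivative S) (at w)"
      by (rule has_field_derivative_transform_within_open[OF S, of "{0<..}"]) (use w qQ in auto)
    moreover then have "s w = S" unfolding s_def q_def using DERIV_imp_deriv by blast
    ultimately show ?thesis by simp
  qed
  have ppos: "p w > 0" if "w > 0" for w
    using ZP that pP[OF that] unfolding P_def by auto
  have E0: "(w\<^sup>2 - 1 / (p w)\<^sup>2) * q w + C * w / (zeta w)\<^sup>2 - 2 / zeta w = 0" if w: "w > 0" for w
  proof -
    define y where "y = zeta w"
    define o1 where "o1 = omega y"
    define o2 where "o2 = deriv omega y"
    define r where "r = rho y"
    have y: "y > 0" "o1 > 0" and rel: "2 * y^3 * r * o1 = C * w"
      using ZP w unfolding y_def o1_def r_def C_def by auto
    have R2: "(1 - y\<^sup>2 * o1\<^sup>2) * (y * o2 - 1 + 3 * o1) - 2 * y\<^sup>2 * o1\<^sup>2 * (r - o1) = 0"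
      unfolding o1_def o2_def r_def using LP_rel(2)[OF rho_an omega_an rho_ode omega_ode] .
    have pw: "p w = y * o1 / w" and qw: "q w = (y * o1 / w) * (o1 + y * o2 - 1) / w"
      using pP[OF w] qQ[OF w] unfolding P_def Q_def y_def o1_def o2_def by auto
    have Cw: "C * w / y\<^sup>2 = 2 * y * r * o1" using rel[symmetric] y by (simp add: field_simps power2_eq_square power3_eq_cube)
    have key: "(y\<^sup>2 * o1\<^sup>2 - 1) * (o1 + y * o2 - 1) = 2 * o1 - 2 * y\<^sup>2 * o1\<^sup>2 * r"
      using R2 by (simp add: algebra_simps power2_eq_square)
    have "(w\<^sup>2 - 1 / (p w)\<^sup>2) * q w = (y\<^sup>2 * o1\<^sup>2 - 1) * (o1 + y * o2 - 1) / (y * o1)"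
      unfolding pw qw using w y by (simp add: field_simps power2_eq_square)
    also have "\<dots> = 2 / y - 2 * y * o1 * r" unfolding key using y by (simp add: field_simps power2_eq_square)
    finally show ?thesis unfolding y_def[symmetric] Cw by simp
  qed
  define Ef where "Ef w = (w\<^sup>2 - 1 / (p w)\<^sup>2) * q w + C * w / (zeta w)\<^sup>2 - 2 / zeta w" for w
  have zpos: "zeta z > 0" using ZP z0 by auto
  have dE: "(Ef has_real_derivative ((2 * z + 2 * q z / (p z)^3) * q z + (z\<^sup>2 - 1 / (p z)\<^sup>2) * s z + C / (zeta z)\<^sup>2
        - 2 * C * z * p z / (zeta z)^3 + 2 * p z / (zeta z)\<^sup>2)) (at z)"
  proof -
    have A: "(Ef has_real_derivative
       (2 * z - (- (2 * p z * q z) / ((p z)\<^sup>2)\<^sup>2)) * q z + (z\<^sup>2 - 1 / (p z)\<^sup>2) * s z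
        + (C * (zeta z)\<^sup>2 - C * z * (2 * zeta z * p z)) / ((zeta z)\<^sup>2)\<^sup>2
        - (- (2 * p z) / (zeta z)\<^sup>2)) (at z)"
      unfolding Ef_def[abs_def] using z0 zpos ppos[OF z0]
      by (auto intro!: derivative_eq_intros Dz Dp Dq simp: power2_eq_square)
    have B: "(2 * z - (- (2 * p z * q z) / ((p z)\<^sup>2)\<^sup>2)) * q z + (z\<^sup>2 - 1 / (p z)\<^sup>2) * s z
        + (C * (zeta z)\<^sup>2 - C * z * (2 * zeta z * p z)) / ((zeta z)\<^sup>2)\<^sup>2
        - (- (2 * p z) / (zeta z)\<^sup>2) = (2 * z + 2 * q z / (p z)^3) * q z + (z\<^sup>2 - 1 / (p z)\<^sup>2) * s z + C / (zeta z)\<^sup>2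
        - 2 * C * z * p z / (zeta z)^3 + 2 * p z / (zeta z)\<^sup>2"
      using zpos ppos[OF z0] by (simp add: field_simps power2_eq_square power3_eq_cube)
    show ?thesis using A unfolding B .
  qed
  have "(Ef has_real_derivative 0) (at z)"
    by (rule has_field_derivative_transform_within_open[of "\<lambda>_. 0" 0 z "{0<..}"])
       (use z0 E0 Ef_def in auto)
  then have E1: "(2 * z + 2 * q z / (p z)^3) * q z + (z\<^sup>2 - 1 / (p z)\<^sup>2) * s z + C / (zeta z)\<^sup>2
        - 2 * C * z * p z / (zeta z)^3 + 2 * p z / (zeta z)\<^sup>2 = 0"
    using DERIV_unique[OF dE] by blast
  show ?thesis using Dz[OF z0] Dp[OF z0] Dq[OF z0] zpos ppos[OF z0] E0[OF z0] E1 by blast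
qed


lemma alg_K:
  fixes c t p q s z :: real
  assumes c: "c > 0" and p: "p > 0" and zc: "z = c^3"
  shows "c^2 * ((((2/3)*(-(z*q)/c-t/(3*c^4)) - ((2/3)*z*q/c + c^2*q + c^2*z* s)) * (c^4*p^2)
      - ((2/3)*t/c - c^2*z*q) * ((4/3)*c*p^2+2*c^4*p*q)) / (c^4*p^2)^2)
     = 2*z*q^2/p^3 - q/p^2 - z* s/p^2 - t*((10/9)/(z^2*p^2) + (4/3)*q/(z*p^3))"
  unfolding zc using c p by (simp add: field_simps) algebra

lemma alg_V:
  fixes c Z p q C z :: real
  assumes c: "c > 0" and p: "p > 0" and zc: "z = c^3"
  shows "2/9 * (1/c^2) * (1/(c^4*p^2)) + 4/3 * (1/c) * (c^2 * ((2/3)*p/c + c^2*q)) * (1/(c^6*p^3))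
     = (10/9)/(z^2*p^2) + (4/3)*q/(z*p^3)"
  unfolding zc using c p by (simp add: field_simps) algebra

lemma alg_fin:
  fixes Z p q s C z :: real
  assumes z: "z > 0" and Z: "Z > 0" and p: "p > 0"
    and E0: "(z^2 - 1/p^2) * q + C*z/Z^2 - 2/Z = 0"
    and E1: "(2*z + 2*q/p^3)*q + (z^2 - 1/p^2)* s + C/Z^2 - 2*C*z*p/Z^3 + 2*p/Z^2 = 0"
  shows "- (z * (-(2*z*q + z^2* s))) + (2*z*q^2/p^3 - q/p^2 - z* s/p^2 - (Z - z*p)*((10/9)/(z^2*p^2) + (4/3)*q/(z*p^3)))
     + ((10/9)/(z^2*p^2) + (4/3)*q/(z*p^3) - 2/Z^2 + 2*C*z/Z^3) * (Z - z*p) = -(z^2*q)"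
proof -
  have "- (z * (-(2*z*q + z^2* s))) + (2*z*q^2/p^3 - q/p^2 - z* s/p^2 - (Z - z*p)*((10/9)/(z^2*p^2) + (4/3)*q/(z*p^3)))
     + ((10/9)/(z^2*p^2) + (4/3)*q/(z*p^3) - 2/Z^2 + 2*C*z/Z^3) * (Z - z*p) - (-(z^2*q))
     = z * ((2*z + 2*q/p^3)*q + (z^2 - 1/p^2)* s + C/Z^2 - 2*C*z*p/Z^3 + 2*p/Z^2) + ((z^2 - 1/p^2) * q + C*z/Z^2 - 2/Z)"
    using z Z p by (simp add: field_simps) algebra
  then show ?thesis using E0 E1 by simp
qed


theorem lemmaL:
  fixes rho omega zeta :: "real \<Rightarrow> real"
  assumes rho_an: "real_analytic_on rho UNIV"
    and omega_an: "real_analytic_on omega UNIV"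
    and rho_even: "\<forall>y. rho (- y) = rho y"
    and omega_even: "\<forall>y. omega (- y) = omega y"
    and rho_ode: "\<forall>y. y \<noteq> 0 \<and> 1 - y\<^sup>2 * (omega y)\<^sup>2 \<noteq> 0 \<longrightarrow>
        (rho has_real_derivative
           (- (2 * y * rho y * omega y * (rho y - omega y)) / (1 - y\<^sup>2 * (omega y)\<^sup>2))) (at y)"
    and omega_ode: "\<forall>y. y \<noteq> 0 \<and> 1 - y\<^sup>2 * (omega y)\<^sup>2 \<noteq> 0 \<longrightarrow>
        (omega has_real_derivative
           ((1 - 3 * omega y) / y
            + (2 * y * (omega y)\<^sup>2 * (rho y - omega y)) / (1 - y\<^sup>2 * (omega y)\<^sup>2))) (at y)"
    and omega0: "omega 0 = 1/3"
    and rho0: "rho 0 > 1/3"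
    and zeta_incr: "strict_mono_on {0<..} zeta"
    and zeta_ode: "\<forall>z>0. zeta differentiable (at z) \<and> z * deriv zeta z = zeta z * omega (zeta z)"
    and zeta_asym: "((\<lambda>z. z powr (-1/3) * zeta z) \<longlongrightarrow> 1) (at_right 0)"
  defines "C_LP \<equiv> 2/3 * rho 0"
    and "GammaV \<equiv> ((\<lambda>z. zeta z - Lam zeta z), (\<lambda>z. Lam zeta z - Lam (Lam zeta) z))"
    and "mu \<equiv> (\<lambda>z. Lam zeta z - zeta z)"
  shows "(\<forall>z>0. fst (Lop C_LP zeta GammaV) z = fst GammaV z
               \<and> snd (Lop C_LP zeta GammaV) z = snd GammaV z)
       \<and> (\<forall>z>0. ((\<lambda>T. inverse (T + 1) * zeta (z * (T + 1))) has_real_derivative (- fst GammaV z)) (at 0)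
               \<and> ((\<lambda>T. mu (z * (T + 1))) has_real_derivative (- snd GammaV z)) (at 0))"
proof -
  define p where "p = deriv zeta"
  define q where "q = deriv p"
  define s where "s = deriv q"
  have SM: "(zeta has_real_derivative p w) (at w) \<and> (p has_real_derivative q w) (at w)
     \<and> (q has_real_derivative s w) (at w) \<and> zeta w > 0 \<and> p w > 0
     \<and> (w\<^sup>2 - 1 / (p w)\<^sup>2) * q w + C_LP * w / (zeta w)\<^sup>2 - 2 / zeta w = 0
     \<and> (2 * w + 2 * q w / (p w)^3) * q w + (w\<^sup>2 - 1 / (p w)\<^sup>2) * s w + C_LP / (zeta w)\<^sup>2
        - 2 * C_LP * w * p w / (zeta w)^3 + 2 * p w / (zeta w)\<^sup>2 = 0" if "w > 0" for w
    using zeta_smooth[OF rho_an omega_an rho_ode omega_ode omega0 zeta_incr zeta_ode zeta_asym that]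
    unfolding p_def q_def s_def C_LP_def by blast
  have Dz: "\<And>w. w > 0 \<Longrightarrow> (zeta has_real_derivative p w) (at w)"
   and Dp: "\<And>w. w > 0 \<Longrightarrow> (p has_real_derivative q w) (at w)"
   and Dq: "\<And>w. w > 0 \<Longrightarrow> (q has_real_derivative s w) (at w)"
   and zp: "\<And>w. w > 0 \<Longrightarrow> zeta w > 0"
   and pp: "\<And>w. w > 0 \<Longrightarrow> p w > 0"
    using SM by blast+
  have LamZ: "Lam zeta = (\<lambda>w. w * p w)" unfolding Lam_def p_def by simp
  have DLz: "(Lam zeta has_real_derivative p w + w * q w) (at w)" if "w > 0" for w
    unfolding LamZ using DERIV_mult[OF DERIV_ident Dp[OF that]] by (simp add: algebra_simps)
  have LLz: "Lam (Lam zeta) w = w * (p w + w * q w)" if "w > 0" for w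
    unfolding Lam_def[of "Lam zeta"] using DERIV_imp_deriv[OF DLz[OF that]] by simp
  define th where "th = (\<lambda>w. zeta w - Lam zeta w)"
  define ph where "ph = (\<lambda>w. Lam zeta w - Lam (Lam zeta) w)"
  have th_eq: "th w = zeta w - w * p w" for w unfolding th_def LamZ by simp
  have ph_eq: "ph w = - (w\<^sup>2 * q w)" if "w > 0" for w
    unfolding ph_def LamZ using LLz[OF that] unfolding LamZ by (simp add: algebra_simps power2_eq_square)
  have Dth: "(th has_real_derivative - (w * q w)) (at w)" if "w > 0" for w
    unfolding th_eq[abs_def] using DERIV_diff[OF Dz[OF that] DERIV_mult[OF DERIV_ident Dp[OF that]]]
    by (simp add: algebra_simps)
  have GV: "GammaV = (th, ph)" unfolding GammaV_def th_def ph_def by simp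
  show ?thesis
  proof (intro conjI allI impI)
    fix z :: real assume z: "z > 0"
    show "fst (Lop C_LP zeta GammaV) z = fst GammaV z"
      unfolding GV Lop_def using DERIV_imp_deriv[OF Dth[OF z]] ph_eq[OF z]
      by (simp add: Lam_def[of th] power2_eq_square)
    show "snd (Lop C_LP zeta GammaV) z = snd GammaV z"
    proof -
      have crpos: "w powr (1/3) > 0" if "w > 0" for w :: real using that by simp
      have cr2: "w powr (2/3) = (w powr (1/3))^2" if "w > 0" for w :: real
        using that by (simp add: powr_power)
      have dcr: "((\<lambda>w. w powr (1/3)) has_real_derivative 1 / (3 * (w powr (1/3))^2)) (at w)" if w: "w > 0" for w :: real
      proof -
        have "w powr (1/3 - 1) = inverse (w powr (2/3))"
          using w by (simp add: powr_minus[symmetric])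
        then have "1/3 * w powr (1/3 - 1) = 1 / (3 * (w powr (1/3))^2)" using cr2[OF w] by (simp add: field_simps)
        then show ?thesis using has_real_derivative_powr[OF w, of "1/3"] by simp
      qed
      define c where "c = z powr (1/3)"
      have c0: "c > 0" unfolding c_def using z by simp
      have cz: "z = c^3" unfolding c_def using z by (simp add: powr_power)
      define Z where "Z = zeta z"
      define P where "P = p z"
      define Qv where "Qv = q z"
      define S where "S = s z"
      have Z0: "Z > 0" and P0: "P > 0" using zp pp z unfolding Z_def P_def by auto
      have E0: "(z^2 - 1/P^2) * Qv + C_LP*z/Z^2 - 2/Z = 0"
        and E1: "(2*z + 2*Qv/P^3)*Qv + (z^2 - 1/P^2)*S + C_LP/Z^2 - 2*C_LP*z*P/Z^3 + 2*P/Z^2 = 0"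
        using SM[OF z] unfolding Z_def P_def Qv_def S_def by auto
      have dph: "(ph has_real_derivative -(2*z*Qv + z^2*S)) (at z)"
      proof -
        have "((\<lambda>w. -(w^2 * q w)) has_real_derivative -(2*z*Qv + z^2*S)) (at z)"
          by (rule DERIV_cong[OF DERIV_minus[OF DERIV_mult[OF DERIV_power[OF DERIV_ident, of 2] Dq[OF z]]]])
             (simp add: Qv_def S_def algebra_simps)
        then show ?thesis
          by (rule has_field_derivative_transform_within_open[of _ _ _ "{0<..}"]) (use z ph_eq in auto)
      qed
      have Lph: "Lam ph z = z * (-(2*z*Qv + z^2*S))"
        unfolding Lam_def using DERIV_imp_deriv[OF dph] by simp
      define hD where "hD w = 2/3 * th w / w powr (1/3) - (w powr (1/3))^2 * w * q w" for w
      have hDeq: "hatD th w = hD w" if w: "w > 0" for w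
      proof -
        have "((\<lambda>s. (s powr (1/3))^2 * th s) has_real_derivative hD w) (at w)"
          by (rule DERIV_cong[OF DERIV_mult[OF DERIV_power[OF dcr[OF w], of 2] Dth[OF w]]])
             (use w in \<open>simp add: hD_def field_simps power2_eq_square\<close>)
        then have "((\<lambda>s. s powr (2/3) * th s) has_real_derivative hD w) (at w)"
          by (rule has_field_derivative_transform_within_open[of _ _ _ "{0<..}"]) (use w cr2 in auto)
        then show ?thesis unfolding hatD_def by (rule DERIV_imp_deriv)
      qed
      have Gh: "Ghat zeta w = 1 / ((w powr (1/3))^4 * (p w)^2)" if w: "w > 0" for w
        unfolding Ghat_def hatd_def p_def[symmetric] cr2[OF w] by (simp add: field_simps power_mult_distrib)
      define t where "t = th z"
      define N1 where "N1 = (2/3)*(-(z*Qv)/c-t/(3*c^4)) - ((2/3)*z*Qv/c + c^2*Qv + c^2*z*S)"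
      define Dn1 where "Dn1 = (4/3)*c*P^2+2*c^4*P*Qv"
      have dhD: "(hD has_real_derivative N1) (at z)"
        unfolding hD_def[abs_def]
        by (rule DERIV_cong[OF DERIV_diff[OF DERIV_divide[OF DERIV_cmult[OF Dth[OF z]] dcr[OF z]]
              DERIV_mult[OF DERIV_mult[OF DERIV_power[OF dcr[OF z], of 2] DERIV_ident] Dq[OF z]]]])
           (use z c0 in \<open>simp_all add: N1_def c_def[symmetric] t_def Qv_def S_def field_simps power2_eq_square eval_nat_numeral\<close>)
      have dDn: "((\<lambda>w. (w powr (1/3))^4 * (p w)^2) has_real_derivative Dn1) (at z)"
        by (rule DERIV_cong[OF DERIV_mult[OF DERIV_power[OF dcr[OF z], of 4] DERIV_power[OF Dp[OF z], of 2]]])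
           (use z c0 in \<open>simp add: Dn1_def c_def[symmetric] P_def Qv_def field_simps power2_eq_square eval_nat_numeral\<close>)
      define HD where "HD = (N1 * (c^4*P^2) - ((2/3)*t/c - c^2*z*Qv) * Dn1) / (c^4*P^2)^2"
      have dHf: "((\<lambda>w. hD w / ((w powr (1/3))^4 * (p w)^2)) has_real_derivative HD) (at z)"
        by (rule DERIV_cong[OF DERIV_divide[OF dhD dDn]])
           (use z c0 P0 in \<open>simp_all add: HD_def hD_def c_def[symmetric] P_def t_def Qv_def power2_eq_square\<close>)
      have dH: "((\<lambda>w. Ghat zeta w * hatD th w) has_real_derivative HD) (at z)"
        by (rule has_field_derivative_transform_within_open[OF dHf, of "{0<..}"]) (use z hDeq Gh in auto)
      have Kv: "Kop zeta th z = c^2 * HD"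
        unfolding Kop_def hatd_def DERIV_imp_deriv[OF dH] cr2[OF z] c_def ..
      have Kv2: "Kop zeta th z = 2*z*Qv^2/P^3 - Qv/P^2 - z*S/P^2 - t*((10/9)/(z^2*P^2) + (4/3)*Qv/(z*P^3))"
        unfolding Kv HD_def N1_def Dn1_def by (rule alg_K[OF c0 P0 cz])
      have dhz: "((\<lambda>w. w powr (2/3) * deriv zeta w) has_real_derivative (2/3)*P/c + c^2*Qv) (at z)"
      proof -
        have "((\<lambda>w. (w powr (1/3))^2 * p w) has_real_derivative (2/3)*P/c + c^2*Qv) (at z)"
          by (rule DERIV_cong[OF DERIV_mult[OF DERIV_power[OF dcr[OF z], of 2] Dp[OF z]]])
             (use z c0 in \<open>simp add: c_def[symmetric] P_def Qv_def field_simps power2_eq_square eval_nat_numeral\<close>)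
        then show ?thesis
          by (rule has_field_derivative_transform_within_open[of _ _ _ "{0<..}"]) (use z cr2 p_def in auto)
      qed
      have hz: "hatd zeta = (\<lambda>w. w powr (2/3) * deriv zeta w)" by (simp add: hatd_def[abs_def])
      have hh: "hatd (hatd zeta) z = c^2 * ((2/3)*P/c + c^2*Qv)"
        by (simp only: hz hatd_def[of "\<lambda>w. w powr (2/3) * deriv zeta w" z] DERIV_imp_deriv[OF dhz] cr2[OF z] c_def)
      have Gz: "Ghat zeta z = 1/(c^4*P^2)" using Gh[OF z] unfolding c_def P_def .
      have G32: "(1/(c^4*P^2)) powr (3/2) = 1/(c^6*P^3)"
      proof -
        define x where "x = 1/(c^2*P)"
        have x0: "x > 0" unfolding x_def using c0 P0 by simp
        have a: "1/(c^4*P^2) = x powr 2"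
        proof -
          have "x powr 2 = x^2" using x0 by (simp only: powr_numeral less_imp_le)
          also have "\<dots> = 1/(c^4*P^2)" unfolding x_def by (simp add: power_mult_distrib power_divide flip: power_mult)
          finally show ?thesis by simp
        qed
        have "(x powr 2) powr (3/2) = x powr (2 * (3/2))" by (rule powr_powr)
        also have "\<dots> = x powr 3" by simp
        also have "\<dots> = x^3" using x0 by (simp only: powr_numeral less_imp_le)
        also have "\<dots> = 1/(c^6*P^3)" unfolding x_def by (simp add: power_mult_distrib power_divide flip: power_mult)
        finally show ?thesis unfolding a .
      qed
      have pw1: "z powr (-2/3) = 1/c^2"
      proof -
        have "z powr (-2/3) = z powr (-(2/3))" by (simp only: minus_divide_left)
        also have "\<dots> = inverse (z powr (2/3))" by (rule powr_minus)
        also have "\<dots> = inverse (c^2)" unfolding cr2[OF z] c_def ..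
        also have "\<dots> = 1/c^2" by (simp only: inverse_eq_divide)
        finally show ?thesis .
      qed
      have pw2: "z powr (-1/3) = 1/c"
      proof -
        have "z powr (-1/3) = z powr (-(1/3))" by (simp only: minus_divide_left)
        also have "\<dots> = inverse (z powr (1/3))" by (rule powr_minus)
        also have "\<dots> = 1/c" unfolding c_def by (simp only: inverse_eq_divide)
        finally show ?thesis .
      qed
      have pw3: "Z powr (-2) = 1/Z^2" "Z powr (-3) = 1/Z^3" using Z0 by (simp_all add: powr_neg_numeral)
      have Vv0: "Vpot C_LP zeta z = 2/9 * (1/c^2) * (1/(c^4*P^2)) - 2 * (1/Z^2)
          + 4/3 * (1/c) * (c^2 * ((2/3)*P/c + c^2*Qv)) * (1/(c^6*P^3)) + 2 * C_LP * z * (1/Z^3)"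
        unfolding Vpot_def Gz hh Z_def[symmetric] pw1 pw2 pw3 G32 ..
      have Vv: "Vpot C_LP zeta z = (10/9)/(z^2*P^2) + (4/3)*Qv/(z*P^3) - 2/Z^2 + 2*C_LP*z/Z^3"
      proof -
        have "2 * (1/Z^2) = 2/Z^2" "2 * C_LP * z * (1/Z^3) = 2*C_LP*z/Z^3" by simp_all
        then show ?thesis unfolding Vv0 using alg_V[OF c0 P0 cz, of Qv] by linarith
      qed
      have thz: "th z = Z - z * P" unfolding th_eq Z_def P_def ..
      have "- Lam ph z + Kop zeta th z + Vpot C_LP zeta z * th z = ph z"
        unfolding Lph Kv2 Vv ph_eq[OF z] t_def thz Qv_def[symmetric]
        by (rule alg_fin[OF z Z0 P0 E0 E1])
      then show ?thesis unfolding GV Lop_def by simp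
    qed
    show "((\<lambda>T. inverse (T + 1) * zeta (z * (T + 1))) has_real_derivative (- fst GammaV z)) (at 0)"
    proof -
      have l: "((\<lambda>T. z * (T + 1)) has_real_derivative z) (at 0)"
        by (auto intro!: derivative_eq_intros)
      have c: "((\<lambda>T. zeta (z * (T + 1))) has_real_derivative p z * z) (at 0)"
        using DERIV_chain'[OF l, of zeta "p z"] Dz[OF z] by simp
      have i: "((\<lambda>T. inverse (T + 1)) has_real_derivative -1) (at (0::real))"
        by (auto intro!: derivative_eq_intros)
      show ?thesis using DERIV_mult[OF i c] unfolding GV th_eq by (simp add: algebra_simps)
    qed
    show "((\<lambda>T. mu (z * (T + 1))) has_real_derivative (- snd GammaV z)) (at 0)"
    proof -
      have l: "((\<lambda>T. z * (T + 1)) has_real_derivative z) (at 0)"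
        by (auto intro!: derivative_eq_intros)
      have mu_eq: "mu = (\<lambda>w. w * p w - zeta w)" unfolding mu_def LamZ by simp
      have dm: "(mu has_real_derivative z * q z) (at z)"
        unfolding mu_eq using DERIV_diff[OF DERIV_mult[OF DERIV_ident Dp[OF z]] Dz[OF z]]
        by (simp add: algebra_simps)
      have c: "((\<lambda>T. mu (z * (T + 1))) has_real_derivative z * q z * z) (at 0)"
        using DERIV_chain'[OF l, of mu "z * q z"] dm by simp
      show ?thesis using c ph_eq[OF z] unfolding GV by (simp add: power2_eq_square mult_ac)
    qed
  qed
qed

end
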